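(* Let $s\ge1$ and $d\ge1$ be integers. There exists a $(0,1)$-matrix $M'$ with ${\rm br}_s(M')=d$ and $r(M')\cdot c(M')=\binom{d}{\le s}2^d$.
   Context: For a $(0,1)$-matrix $M$ of size $n\times m$, $M[i,j]$ denotes its $(i,j)$ entry and $[n]=\{1,\dots,n\}$. The $s$-binary rank ${\rm br}_s(M)$ is the minimal integer $d\ge 0$ such that there exist $d$ sets (rectangles) $I_k\times J_k$ with $I_k\subseteq[n]$, $J_k\subseteq[m]$, $k\in[d]$, with $M[i,j]=1$ for all $(i,j)\in I_k\times J_k$ and all $k$, and such that every $(i,j)$ with $M[i,j]=1$ lies in at least one and at most $s$ of the rectangles. $r(M)$ and $c(M)$ denote the numbers of distinct rows and distinct columns of $M$. $\binom{d}{\le s}=\sum_{i=0}^{s}\binom{d}{i}$. *)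

theory Defs
  imports Main
begin

text \<open>A (0,1)-matrix of size n x m is modelled as M :: nat => nat => bool
  with entries M i j for i in {1..n}, j in {1..m} (True = 1); entries outside
  the index range are ignored by all definitions below.\<close>

definition s_cover :: "nat \<Rightarrow> nat \<Rightarrow> nat \<Rightarrow> (nat \<Rightarrow> nat \<Rightarrow> bool) \<Rightarrow> nat
    \<Rightarrow> (nat \<Rightarrow> nat set) \<Rightarrow> (nat \<Rightarrow> nat set) \<Rightarrow> bool" where
  "s_cover s n m M d I J \<longleftrightarrow>
     (\<forall>k\<in>{1..d}. I k \<subseteq> {1..n} \<and> J k \<subseteq> {1..m} \<and> (\<forall>i\<in>I k. \<forall>j\<in>J k. M i j)) \<and>
     (\<forall>i\<in>{1..n}. \<forall>j\<in>{1..m}. M i j \<longrightarrow>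
        1 \<le> card {k\<in>{1..d}. i \<in> I k \<and> j \<in> J k} \<and>
        card {k\<in>{1..d}. i \<in> I k \<and> j \<in> J k} \<le> s)"

definition binary_rank_s :: "nat \<Rightarrow> nat \<Rightarrow> nat \<Rightarrow> (nat \<Rightarrow> nat \<Rightarrow> bool) \<Rightarrow> nat" where
  "binary_rank_s s n m M = (LEAST d. \<exists>I J. s_cover s n m M d I J)"

definition distinct_rows :: "nat \<Rightarrow> nat \<Rightarrow> (nat \<Rightarrow> nat \<Rightarrow> bool) \<Rightarrow> nat" where
  "distinct_rows n m M = card ((\<lambda>i. (\<lambda>j. if j \<in> {1..m} then M i j else False)) ` {1..n})"

definition distinct_cols :: "nat \<Rightarrow> nat \<Rightarrow> (nat \<Rightarrow> nat \<Rightarrow> bool) \<Rightarrow> nat" where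
  "distinct_cols n m M = card ((\<lambda>j. (\<lambda>i. if i \<in> {1..n} then M i j else False)) ` {1..m})"

definition choose_le :: "nat \<Rightarrow> nat \<Rightarrow> nat" where
  "choose_le d s = (\<Sum>i\<le>s. d choose i)"

end

theory Submission
  imports Defs
begin

lemma shift_bij:
  assumes "finite S"
  shows "\<exists>f. bij_betw f {1..card S} S"
proof -
  obtain h where h: "bij_betw h {0..<card S} S" using ex_bij_betw_nat_finite[OF assms] by blast
  have "bij_betw (\<lambda>i. i - 1) {1..card S} {0..<card S}"
    by (rule bij_betw_byWitness[where f'="\<lambda>i. i + 1"]) auto
  then have "bij_betw (h \<circ> (\<lambda>i. i - 1)) {1..card S} S" using h bij_betw_trans by blast
  then show ?thesis by blast
qed

lemma card_Rs:
  "card {A. A \<subseteq> {1..d::nat} \<and> card A \<le> s} = choose_le d s"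
proof -
  have eq: "{A. A \<subseteq> {1..d::nat} \<and> card A \<le> s} = (\<Union>i\<in>{..s}. {A. A \<subseteq> {1..d} \<and> card A = i})"
    by auto
  have "card (\<Union>i\<in>{..s}. {A. A \<subseteq> {1..d::nat} \<and> card A = i}) = (\<Sum>i\<in>{..s}. card {A. A \<subseteq> {1..d::nat} \<and> card A = i})"
    by (rule card_UN_disjoint) (auto intro: finite_subset[of _ "Pow {1..d}"])
  also have "\<dots> = (\<Sum>i\<le>s. d choose i)" using n_subsets[of "{1..d::nat}"] by simp
  finally show ?thesis using eq choose_le_def by simp
qed

theorem lemma5:
  fixes s d :: nat
  assumes "s \<ge> 1" and "d \<ge> 1"
  shows "\<exists>n m (M :: nat \<Rightarrow> nat \<Rightarrow> bool).
           binary_rank_s s n m M = d \<and>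
           distinct_rows n m M * distinct_cols n m M = choose_le d s * 2 ^ d"
proof -
  define U where "U = {1..d}"
  define Rs where "Rs = {A. A \<subseteq> U \<and> card A \<le> s}"
  have finRs: "finite Rs" unfolding Rs_def U_def by (rule finite_subset[of _ "Pow {1..d}"]) auto
  obtain f where f: "bij_betw f {1..card Rs} Rs" using shift_bij[OF finRs] by blast
  obtain g where g: "bij_betw g {1..card (Pow U)} (Pow U)" using shift_bij[of "Pow U"] U_def by auto
  define n where "n = card Rs"
  define m where "m = card (Pow U)"
  define M where "M = (\<lambda>i j. f i \<inter> g j \<noteq> {})"
  have fU: "f i \<subseteq> U" "card (f i) \<le> s" if "i \<in> {1..n}" for i
    using f that unfolding n_def Rs_def bij_betw_def by auto
  have gU: "g j \<subseteq> U" if "j \<in> {1..m}" for j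
    using g that unfolding m_def bij_betw_def by auto
  define fi where "fi = inv_into {1..n} f"
  define gi where "gi = inv_into {1..m} g"
  have fi: "fi {k} \<in> {1..n}" "f (fi {k}) = {k}" if "k \<in> U" for k
  proof -
    have "{k} \<in> Rs" using that assms unfolding Rs_def by auto
    then have h: "{k} \<in> Rs" .
    {
      have im: "f ` {1..n} = Rs" using f unfolding n_def bij_betw_def by simp
      show "fi {k} \<in> {1..n}" unfolding fi_def by (rule inv_into_into) (use h im in simp)
      show "f (fi {k}) = {k}" unfolding fi_def by (rule f_inv_into_f) (use h im in simp)
    }
  qed
  have gi: "gi {k} \<in> {1..m}" "g (gi {k}) = {k}" if "k \<in> U" for k
  proof -
    have "{k} \<in> Pow U" using that by auto
    then have h: "{k} \<in> Pow U" .
    {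
      have im: "g ` {1..m} = Pow U" using g unfolding m_def bij_betw_def by simp
      show "gi {k} \<in> {1..m}" unfolding gi_def by (rule inv_into_into) (use h im in simp)
      show "g (gi {k}) = {k}" unfolding gi_def by (rule f_inv_into_f) (use h im in simp)
    }
  qed
  have rows: "distinct_rows n m M = n"
    unfolding distinct_rows_def
  proof (rule card_image[THEN trans])
    show "inj_on (\<lambda>i j. if j \<in> {1..m} then M i j else False) {1..n}"
    proof (rule inj_onI)
      fix i1 i2 assume i: "i1 \<in> {1..n}" "i2 \<in> {1..n}"
        and e: "(\<lambda>j. if j \<in> {1..m} then M i1 j else False) = (\<lambda>j. if j \<in> {1..m} then M i2 j else False)"
      have "\<forall>k\<in>U. (k \<in> f i1) = (k \<in> f i2)"
      proof
        fix k assume k: "k \<in> U"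
        have "M i1 (gi {k}) = M i2 (gi {k})" using fun_cong[OF e, of "gi {k}"] gi[OF k] by simp
        then show "(k \<in> f i1) = (k \<in> f i2)" using gi[OF k] unfolding M_def by auto
      qed
      then have "f i1 = f i2" using fU[OF i(1)] fU[OF i(2)] by blast
      moreover have "inj_on f {1..n}" using f unfolding n_def bij_betw_def by simp
      ultimately show "i1 = i2" using i by (meson inj_onD)
    qed
  qed simp
  have cols: "distinct_cols n m M = m"
    unfolding distinct_cols_def
  proof (rule card_image[THEN trans])
    show "inj_on (\<lambda>j i. if i \<in> {1..n} then M i j else False) {1..m}"
    proof (rule inj_onI)
      fix i1 i2 assume i: "i1 \<in> {1..m}" "i2 \<in> {1..m}"
        and e: "(\<lambda>j. if j \<in> {1..n} then M j i1 else False) = (\<lambda>j. if j \<in> {1..n} then M j i2 else False)"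
      have "\<forall>k\<in>U. (k \<in> g i1) = (k \<in> g i2)"
      proof
        fix k assume k: "k \<in> U"
        have "M (fi {k}) i1 = M (fi {k}) i2" using fun_cong[OF e, of "fi {k}"] fi[OF k] by simp
        then show "(k \<in> g i1) = (k \<in> g i2)" using fi[OF k] unfolding M_def by auto
      qed
      then have "g i1 = g i2" using gU[OF i(1)] gU[OF i(2)] by blast
      moreover have "inj_on g {1..m}" using g unfolding m_def bij_betw_def by simp
      ultimately show "i1 = i2" using i by (meson inj_onD)
    qed
  qed simp
  define I where "I = (\<lambda>k. {i\<in>{1..n}. k \<in> f i})"
  define J where "J = (\<lambda>k. {j\<in>{1..m}. k \<in> g j})"
  have cov: "s_cover s n m M d I J"
    unfolding s_cover_def
  proof (intro conjI)
    show "\<forall>k\<in>{1..d}. I k \<subseteq> {1..n} \<and> J k \<subseteq> {1..m} \<and> (\<forall>i\<in>I k. \<forall>j\<in>J k. M i j)"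
      unfolding I_def J_def M_def by auto
  next
    show "\<forall>i\<in>{1..n}. \<forall>j\<in>{1..m}. M i j \<longrightarrow>
        1 \<le> card {k\<in>{1..d}. i \<in> I k \<and> j \<in> J k} \<and>
        card {k\<in>{1..d}. i \<in> I k \<and> j \<in> J k} \<le> s"
    proof (intro ballI impI conjI)
    fix i j assume i: "i \<in> {1..n}" and j: "j \<in> {1..m}" and Mij: "M i j"
    have eq: "{k\<in>{1..d}. i \<in> I k \<and> j \<in> J k} = f i \<inter> g j"
      using fU[OF i] i j unfolding I_def J_def U_def by auto
    have fin: "finite (f i)" using fU[OF i] U_def finite_subset by blast
    show "1 \<le> card {k\<in>{1..d}. i \<in> I k \<and> j \<in> J k}"
      unfolding eq using Mij fin unfolding M_def
      by (simp add: Suc_le_eq card_gt_0_iff)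
    show "card {k\<in>{1..d}. i \<in> I k \<and> j \<in> J k} \<le> s"
      unfolding eq using card_mono[OF fin, of "f i \<inter> g j"] fU(2)[OF i] by auto
  qed
  qed
  have lower: "d \<le> d'" if c: "s_cover s n m M d' I' J'" for d' I' J'
  proof -
    have "\<exists>r\<in>{1..d'}. fi {k} \<in> I' r \<and> gi {k} \<in> J' r" if k: "k \<in> U" for k
    proof -
      have "M (fi {k}) (gi {k})" using fi[OF k] gi[OF k] unfolding M_def by auto
      then have "1 \<le> card {r\<in>{1..d'}. fi {k} \<in> I' r \<and> gi {k} \<in> J' r}"
        using c fi[OF k] gi[OF k] unfolding s_cover_def by blast
      then have "{r\<in>{1..d'}. fi {k} \<in> I' r \<and> gi {k} \<in> J' r} \<noteq> {}" by (metis card.empty not_one_le_zero)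
      then show ?thesis by blast
    qed
    then obtain r where r: "\<And>k. k \<in> U \<Longrightarrow> r k \<in> {1..d'} \<and> fi {k} \<in> I' (r k) \<and> gi {k} \<in> J' (r k)"
      by metis
    have "inj_on r U"
    proof (rule inj_onI)
      fix k k' assume k: "k \<in> U" and k': "k' \<in> U" and e: "r k = r k'"
      have "fi {k} \<in> I' (r k)" "gi {k'} \<in> J' (r k)" using r[OF k] r[OF k'] e by auto
      then have "M (fi {k}) (gi {k'})" using c r[OF k] unfolding s_cover_def by blast
      then show "k = k'" using fi[OF k] gi[OF k'] unfolding M_def by auto
    qed
    moreover have "r ` U \<subseteq> {1..d'}" using r by auto
    ultimately have "card U \<le> card {1..d'}" using card_inj_on_le by blast
    then show ?thesis unfolding U_def by simp
  qed
  have br: "binary_rank_s s n m M = d"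
    unfolding binary_rank_s_def
    by (rule Least_equality) (use cov lower in auto)
  have "n = choose_le d s" unfolding n_def Rs_def U_def by (rule card_Rs)
  moreover have "m = 2 ^ d" unfolding m_def U_def by (simp add: card_Pow)
  ultimately show ?thesis using br rows cols by metis
qed

end
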